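(* Let $\langle (x_n,y_n)\rangle_{n\in\mathbb{N}}$ be the solutions in $\mathbb{N}^2$ of $x^2-19\,y^2=1$, indexed so that $y_0<y_1<\cdots$ (so $39\mid y_k$ for every $k$). Let $n=2^m h$ with $m>0$ and $h$ odd. If $y_n/39$ is representable, then $y_h/39$ is representable.
   Context: $(x_0,y_0)=(1,0)$, $(x_1,y_1)=(170,39)$, $x_n+y_n\sqrt{19}=(170+39\sqrt{19})^n$. A non-negative integer $N$ is called representable if $N=w^2+w\,t+5\,t^2$ for some $w,t\in\mathbb{Z}$ (the norm form of the ring of integers $\mathbb{Z}[\tfrac{1+\sqrt{-19}}{2}]$). *)

theory Defs
  imports Main
begin

text \<open>x_n + y_n sqrt 19 = (170 + 39 sqrt 19)^n, written out as the
  multiplication recursion (x_0,y_0) = (1,0).\<close>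
fun pell19 :: "nat \<Rightarrow> int \<times> int" where
  "pell19 0 = (1, 0)"
| "pell19 (Suc n) = (let (x, y) = pell19 n in (170 * x + 19 * 39 * y, 39 * x + 170 * y))"

definition pell_x :: "nat \<Rightarrow> int" where "pell_x n = fst (pell19 n)"
definition pell_y :: "nat \<Rightarrow> int" where "pell_y n = snd (pell19 n)"

definition representable :: "int \<Rightarrow> bool" where
  "representable N \<longleftrightarrow> N \<ge> 0 \<and> (\<exists>w t :: int. N = w^2 + w * t + 5 * t^2)"

end

theory Submission imports Defs "HOL-Computational_Algebra.Primes" "HOL-Number_Theory.Cong" begin
definition Q :: "int \<Rightarrow> int \<Rightarrow> int" where "Q w t = w^2 + w*t + 5*t^2"

lemma red:
  fixes a :: int
  assumes "a > 0" "b^2 - 4*a*c = -19"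
  shows "\<exists>w t. a*X^2 + b*X*Y + c*Y^2 = Q w t"
  using assms
proof (induction "nat a" arbitrary: a b c X Y rule: less_induct)
  case less
  define k where "k = (b + a) div (2*a)"
  define b' where "b' = b - 2*k*a"
  define c' where "c' = c - k*b' - k^2*a"
  define X' where "X' = X + k*Y"
  have r: "b + a = 2*a*k + (b+a) mod (2*a)" unfolding k_def by simp
  have r1: "0 \<le> (b+a) mod (2*a)" "(b+a) mod (2*a) < 2*a" using less.prems by auto
  have bb: "-a \<le> b'" "b' < a" using r r1 unfolding b'_def by (auto simp: algebra_simps)
  have disc: "b'^2 - 4*a*c' = -19" using less.prems(2) unfolding c'_def b'_def
    by (simp add: algebra_simps power2_eq_square)
  have val: "a*X^2 + b*X*Y + c*Y^2 = a*X'^2 + b'*X'*Y + c'*Y^2"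
    unfolding X'_def c'_def b'_def by (simp add: algebra_simps power2_eq_square)
  have cpos: "c' > 0"
  proof -
    have e: "a*(4*c') = b'^2 + 19" using disc by (simp add: algebra_simps)
    have "b'^2 + 19 > 0" by (simp add: add_nonneg_pos)
    hence "a * (4*c') > 0" using e by simp
    thus ?thesis using less.prems(1) by (simp add: zero_less_mult_iff)
  qed
  show ?case
  proof (cases "c' \<ge> a")
    case True
    have "b'^2 \<le> a^2" using bb by (simp add: abs_le_square_iff[symmetric] abs_le_iff)
    moreover have "a*a \<le> a*c'" using True less.prems(1) by simp
    ultimately have "3*a^2 \<le> 19" using disc by (simp add: power2_eq_square algebra_simps)
    hence "a \<le> 2"
    proof -
      { assume "a \<ge> 3" hence "a*a \<ge> 3*3" using mult_mono[of 3 a 3 a] by simp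
        hence False using \<open>3*a^2 \<le> 19\<close> by (simp add: power2_eq_square) }
      thus ?thesis by force
    qed
    hence "a = 1 \<or> a = 2" using less.prems(1) by linarith
    moreover have "a \<noteq> 2"
    proof
      assume a2: "a = 2"
      hence "b' \<in> {-2,-1,0,1}" using bb by auto
      thus False using disc a2 by (auto; presburger)
    qed
    ultimately have a1: "a = 1" by simp
    hence "b' \<in> {-1,0}" using bb by auto
    hence "b' = -1" "c' = 5" using disc a1 by (auto; presburger)+
    hence "a*X'^2 + b'*X'*Y + c'*Y^2 = Q X' (-Y)" using a1 by (simp add: Q_def)
    thus ?thesis using val by metis
  next
    case False
    have "nat c' < nat a" using False cpos by simp
    moreover have "(-b')^2 - 4*c'*a = -19" using disc by (simp add: algebra_simps)
    ultimately obtain w t where "c'*Y^2 + (-b')*Y*(-X') + a*(-X')^2 = Q w t"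
      using less.hyps cpos by blast
    hence "a*X'^2 + b'*X'*Y + c'*Y^2 = Q w t" by (simp add: algebra_simps power2_eq_square)
    thus ?thesis using val by metis
  qed
qed

lemma Q_nonneg: "Q w t \<ge> 0"
proof -
  have "4 * Q w t = (2*w+t)^2 + 19*t^2" by (simp add: Q_def power2_eq_square algebra_simps)
  moreover have "(2*w+t)^2 + 19*t^2 \<ge> 0" by simp
  ultimately show ?thesis by linarith
qed

lemma prime_rep:
  fixes p :: int
  assumes p: "prime p" and d: "p dvd Q w t" and nd: "\<not> (p dvd w \<and> p dvd t)"
  shows "\<exists>a b. p = Q a b"
proof -
  have pt: "\<not> p dvd t"
  proof
    assume "p dvd t"
    hence "p dvd w^2" using d unfolding Q_def
      by (metis dvd_add_left_iff dvd_mult dvd_mult2 power2_eq_square)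
    hence "p dvd w" using p prime_dvd_power by blast
    thus False using nd \<open>p dvd t\<close> by blast
  qed
  have p2: "p \<noteq> 2"
  proof
    assume "p = 2"
    hence "even (w^2 + w*t + 5*t^2)" using d by (simp add: Q_def)
    hence "even w \<and> even t" by auto
    thus False using nd \<open>p = 2\<close> by simp
  qed
  have "coprime t p" using pt p by (simp add: prime_imp_coprime coprime_commute)
  then obtain s where s: "[t * s = 1] (mod p)"
    by (metis cong_solve_coprime_int)
  define r where "r = (2*w+t)*s"
  have "[4 * Q w t * s^2 = 0] (mod p)" using d
    by (metis cong_0_iff dvd_mult dvd_mult2)
  moreover have "4 * Q w t * s^2 = r^2 + 19 * (t*s)^2"
    unfolding r_def Q_def by (simp add: power2_eq_square algebra_simps)
  moreover have "[r^2 + 19 * (t*s)^2 = r^2 + 19 * 1^2] (mod p)"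
    using s by (intro cong_add cong_mult cong_pow) auto
  ultimately have rc: "[r^2 + 19 = 0] (mod p)"
    by (metis cong_sym cong_trans power_one mult_1_right)
  have "p \<ge> 2" using p prime_ge_2_int by blast
  hence podd: "odd p" using p p2 prime_odd_int by auto
  obtain b where bo: "odd b" and bc: "[b^2 + 19 = 0] (mod p)"
  proof (cases "odd r")
    case True thus ?thesis using that rc by blast
  next
    case False
    have "[(r+p)^2 + 19 = r^2 + 19] (mod p)"
      by (intro cong_add cong_pow) (auto simp: cong_def)
    hence "[(r+p)^2 + 19 = 0] (mod p)" using rc cong_trans by blast
    moreover have "odd (r+p)" using False podd by simp
    ultimately show ?thesis using that by blast
  qed
  obtain k where k: "b = 2*k+1" using bo by (metis oddE)
  have "b^2 + 19 = 4*(k^2+k+5)" using k by (simp add: power2_eq_square algebra_simps)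
  hence "4 dvd b^2 + 19" by simp
  moreover have "p dvd b^2 + 19" using bc by (simp add: cong_0_iff)
  moreover have "coprime 4 p"
  proof -
    have "coprime 2 p" using podd by (simp add: coprime_commute)
    hence "coprime (2*2) p" by (simp only: coprime_mult_left_iff)
    thus ?thesis by simp
  qed
  ultimately have "4*p dvd b^2 + 19" by (simp add: divides_mult)
  then obtain c where c: "b^2 + 19 = 4*p*c" by (metis dvd_def mult.assoc)
  have "p > 0" using p prime_gt_0_int by blast
  then obtain a b0 where "p*1^2 + b*1*0 + c*0^2 = Q a b0"
    using red[of p b c 1 0] c by fastforce
  thus ?thesis by auto
qed

lemma descent:
  fixes p :: int
  assumes p: "prime p" and d: "p dvd Q w t"
  shows "(\<exists>w' t'. Q w t = p * Q w' t') \<or> (\<exists>w' t'. Q w t = p^2 * Q w' t')"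
proof (cases "p dvd w \<and> p dvd t")
  case True
  then obtain w' t' where "w = p*w'" "t = p*t'" by blast
  hence "Q w t = p^2 * Q w' t'" by (simp add: Q_def power2_eq_square algebra_simps)
  thus ?thesis by blast
next
  case False
  obtain a b where ab: "p = Q a b" using prime_rep[OF p d False] by blast
  have id: "(t*a - w*b)*(w*b + t*a + t*b) = t^2 * Q a b - b^2 * Q w t"
    by (simp add: Q_def power2_eq_square algebra_simps)
  have "p dvd t^2 * Q a b - b^2 * Q w t" using ab d by simp
  hence "p dvd (t*a - w*b) \<or> p dvd (w*b + t*a + t*b)"
    using id p by (metis prime_dvd_mult_iff)
  then obtain u v where uv: "p dvd v" "Q u v = p * Q w t"
  proof
    assume "p dvd (t*a - w*b)"
    moreover have "Q (w*a+w*b+5*t*b) (t*a - w*b) = p * Q w t"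
      using ab by (simp add: Q_def power2_eq_square algebra_simps)
    ultimately show ?thesis using that by blast
  next
    assume "p dvd (w*b + t*a + t*b)"
    moreover have "Q (w*a - 5*t*b) (w*b + t*a + t*b) = p * Q w t"
      using ab by (simp add: Q_def power2_eq_square algebra_simps)
    ultimately show ?thesis using that by blast
  qed
  obtain v' where v': "v = p*v'" using uv(1) by blast
  have "p dvd Q u v" using uv(2) by simp
  moreover have "Q u v = u^2 + p*(u*v' + 5*p*v'^2)" using v'
    by (simp add: Q_def power2_eq_square algebra_simps)
  ultimately have "p dvd u^2" by (metis dvd_add_left_iff dvd_triv_left)
  hence "p dvd u" using p prime_dvd_power by blast
  then obtain u' where u': "u = p*u'" by blast
  have "Q u v = p^2 * Q u' v'" using u' v' by (simp add: Q_def power2_eq_square algebra_simps)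
  hence "p * (p * Q u' v') = p * Q w t" using uv(2) by (metis power2_eq_square mult.assoc)
  moreover have "p \<noteq> 0" using p by auto
  ultimately have "Q w t = p * Q u' v'" by (metis mult_left_cancel)
  thus ?thesis by blast
qed

lemma cancel:
  fixes A B :: int
  assumes "A > 0" "coprime A B" "\<exists>w t. A*B = Q w t"
  shows "\<exists>w t. B = Q w t"
  using assms
proof (induction "nat A" arbitrary: A rule: less_induct)
  case less
  show ?case
  proof (cases "A = 1")
    case True thus ?thesis using less.prems by simp
  next
    case False
    have "\<not> is_unit A" using False less.prems(1) by auto
    then obtain p where p: "prime p" "p dvd A"
      using less.prems(1) prime_divisor_exists[of A] by auto
    obtain w t where wt: "A*B = Q w t" using less.prems(3) by blast
    have pB: "\<not> p dvd B" using p less.prems(2)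
      by (meson coprime_common_divisor not_prime_unit)
    have p1: "p > 1" using p prime_gt_1_int by blast
    have "p dvd Q w t" using wt p(2) by (metis dvd_mult2)
    from descent[OF p(1) this] show ?thesis
    proof (elim disjE exE)
      fix w' t' assume h: "Q w t = p * Q w' t'"
      obtain A' where A': "A = p*A'" using p(2) by blast
      have "A' > 0" using A' less.prems(1) p1 by (simp add: zero_less_mult_iff)
      moreover have "nat A' < nat A" using A' p1 \<open>A' > 0\<close> by simp
      moreover have "coprime A' B" using less.prems(2) A' by simp
      moreover have "A'*B = Q w' t'" using h wt A' p1 by simp
      ultimately show ?thesis using less.hyps by blast
    next
      fix w' t' assume h: "Q w t = p^2 * Q w' t'"
      have "coprime (p^2) B" using pB p by (simp add: prime_imp_coprime)
      moreover have "p^2 dvd A*B" using h wt by simp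
      ultimately have "p^2 dvd A" using coprime_dvd_mult_left_iff by blast
      then obtain A' where A': "A = p^2*A'" by blast
      have pp: "p^2 > 1" using p1 by simp
      have "A' > 0" using A' less.prems(1) pp by (simp add: zero_less_mult_iff)
      moreover have "A' < A" using A' pp \<open>A' > 0\<close> by (simp add: mult_less_cancel_right1)
      hence "nat A' < nat A" using \<open>A' > 0\<close> by simp
      moreover have "coprime A' B" using less.prems(2) A' by simp
      moreover have "A'*B = Q w' t'" using h wt A' p1 by auto
      ultimately show ?thesis using less.hyps by blast
    qed
  qed
qed

lemma rep_iff: "representable N \<longleftrightarrow> (\<exists>w t. N = Q w t)"
  unfolding representable_def Q_def using Q_nonneg unfolding Q_def by metis

lemma pell19_eq: "pell19 n = (pell_x n, pell_y n)"
  by (simp add: pell_x_def pell_y_def)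

lemma pell_Suc: "pell_x (Suc n) = 170 * pell_x n + 741 * pell_y n"
  "pell_y (Suc n) = 39 * pell_x n + 170 * pell_y n"
  by (simp_all add: pell_x_def pell_y_def split: prod.splits)

lemma pell_0: "pell_x 0 = 1" "pell_y 0 = 0"
  by (simp_all add: pell_x_def pell_y_def)

lemma pell_add: "pell_x (a + b) = pell_x a * pell_x b + 19 * pell_y a * pell_y b \<and>
  pell_y (a + b) = pell_x a * pell_y b + pell_y a * pell_x b"
  by (induction b) (simp_all add: pell_Suc pell_0 algebra_simps)

lemma pell_double: "pell_y (2*k) = 2 * pell_x k * pell_y k"
proof -
  have "pell_y (2*k) = pell_y (k+k)" by (simp add: mult_2)
  also have "\<dots> = pell_x k * pell_y k + pell_y k * pell_x k" using pell_add[of k k] by blast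
  finally show ?thesis by (simp add: mult.commute)
qed

lemma pell_eq: "pell_x n ^ 2 - 19 * pell_y n ^ 2 = 1"
  by (induction n) (simp_all add: pell_Suc pell_0 power2_eq_square algebra_simps)

lemma pell_pos: "pell_x n \<ge> 1 \<and> pell_y n \<ge> 0"
  by (induction n) (simp_all add: pell_Suc pell_0)

lemma pell_ypos: "n > 0 \<Longrightarrow> pell_y n > 0"
  using pell_pos[of "n - 1"] pell_Suc(2)[of "n - 1"] by (cases n) auto

lemma pell_39: "39 dvd pell_y n"
  by (induction n) (simp_all add: pell_Suc pell_0)

lemma pell_par: "(odd (pell_y n) \<longleftrightarrow> odd n) \<and> (odd (pell_x n) \<longleftrightarrow> even n)"
  by (induction n) (simp_all add: pell_Suc pell_0)

lemma pell_coprime: "coprime (pell_x n) (pell_y n)"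
proof (rule coprimeI)
  fix c assume "c dvd pell_x n" "c dvd pell_y n"
  hence "c dvd pell_x n ^ 2 - 19 * pell_y n ^ 2" by (metis dvd_diff dvd_mult dvd_mult2 power2_eq_square)
  thus "is_unit c" using pell_eq[of n] by simp
qed

lemma pell_chain:
  assumes "odd h"
  shows "\<exists>A. A > 0 \<and> pell_y (2^i * h) = A * pell_y h \<and> coprime A (pell_y h)"
proof (induction i)
  case 0 show ?case by (intro exI[of _ 1]) simp
next
  case (Suc i)
  then obtain A where A: "A > 0" "pell_y (2^i * h) = A * pell_y h" "coprime A (pell_y h)" by blast
  define j where "j = 2^i * h"
  have "pell_y (2^Suc i * h) = pell_y (2*j)" unfolding j_def by (simp add: mult.assoc)
  also have "\<dots> = (2 * pell_x j * A) * pell_y h" using pell_double[of j] A(2) j_def by simp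
  finally have e: "pell_y (2^Suc i * h) = (2 * pell_x j * A) * pell_y h" .
  have "odd (pell_y h)" using pell_par[of h] assms by simp
  hence c2: "coprime 2 (pell_y h)" by simp
  have "pell_y h dvd pell_y j" using A(2) j_def by simp
  hence cx: "coprime (pell_x j) (pell_y h)" by (rule coprime_divisors[OF dvd_refl _ pell_coprime[of j]])
  have "pell_x j > 0" using pell_pos[of j] by simp
  hence "2 * pell_x j * A > 0" using A(1) by simp
  moreover have "coprime (2 * pell_x j * A) (pell_y h)" using c2 cx A(3) by (simp only: coprime_mult_left_iff)
  ultimately show ?case using e by blast
qed

theorem lemma3:
  fixes n m h :: nat
  assumes "n = 2 ^ m * h" and "m > 0" and "odd h"
    and "representable (pell_y n div 39)"
  shows "representable (pell_y h div 39)"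
proof -
  obtain A where A: "A > 0" "pell_y n = A * pell_y h" "coprime A (pell_y h)"
    using pell_chain[OF assms(3), of m] assms(1) by blast
  obtain B where B: "pell_y h = 39 * B" using pell_39[of h] by blast
  have "pell_y n div 39 = A * B" using A(2) B by simp
  moreover have "pell_y h div 39 = B" using B by simp
  moreover have "coprime A B" using A(3) B by simp
  ultimately show ?thesis using assms(4) cancel[OF A(1)] by (simp add: rep_iff)
qed

end
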